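(* Let $(X,\tau)$ be an extended locally convex space. Then there exists a locally convex topology $\tau_F$ on $X$ with the following properties: (a) $\tau_F\subseteq\tau$; (b) if $\sigma$ is any locally convex topology on $X$ with $\sigma\subseteq\tau$, then $\sigma\subseteq\tau_F$.
   Context: Let $X$ be a vector space over $\mathbb{R}$ or $\mathbb{C}$. An extended seminorm on $X$ is a map $\rho:X\to[0,\infty]$ with $\rho(\alpha x)=|\alpha|\rho(x)$ for all scalars $\alpha$ and $x\in X$ (with $0\cdot\infty=0$), and $\rho(x+y)\le\rho(x)+\rho(y)$. An extended locally convex space (elcs) is a pair $(X,\tau)$ where $\tau$ is the topology on $X$ induced by some family $\{\rho_i\}_{i\in I}$ of extended seminorms, i.e. a neighborhood base at each $x_0\in X$ is formed by the sets $\{x:\max_{i\in J}\rho_i(x-x_0)<\varepsilon\}$, $J\subseteq I$ finite, $\varepsilon>0$. (This is equivalent to the Salas–García definition: a group topology that is the supremum of a family of "fundamental" extended locally convex topologies, each making $X$ topologically the product of a locally convex subspace and a discrete subspace.) A locally convex topology on $X$ is a topology induced in the same way by a family of finite-valued seminorms (Hausdorffness not assumed). *)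

theory Defs
  imports "HOL-Analysis.Analysis"
begin

text \<open>Vector space structure is given by a scalar multiplication s :: 'k => 'a => 'a
(with vector_space s); the scalar field is real or complex, |alpha| is norm alpha.
Topologies on the whole space X = UNIV are represented by their collections of open sets.\<close>

definition ext_seminorm :: "('k::real_normed_field \<Rightarrow> 'a::ab_group_add \<Rightarrow> 'a) \<Rightarrow> ('a \<Rightarrow> ennreal) \<Rightarrow> bool" where
  "ext_seminorm s \<rho> \<longleftrightarrow>
     (\<forall>\<alpha> x. \<rho> (s \<alpha> x) = ennreal (norm \<alpha>) * \<rho> x) \<and>
     (\<forall>x y. \<rho> (x + y) \<le> \<rho> x + \<rho> y)"

definition seminorm :: "('k::real_normed_field \<Rightarrow> 'a::ab_group_add \<Rightarrow> 'a) \<Rightarrow> ('a \<Rightarrow> ennreal) \<Rightarrow> bool" where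
  "seminorm s \<rho> \<longleftrightarrow> ext_seminorm s \<rho> \<and> (\<forall>x. \<rho> x < \<infinity>)"

definition induced_topology :: "('a::ab_group_add \<Rightarrow> ennreal) set \<Rightarrow> 'a set set" where
  "induced_topology P = {U. \<forall>x0\<in>U. \<exists>J \<epsilon>. finite J \<and> J \<subseteq> P \<and> \<epsilon> > 0 \<and>
       {x. \<forall>\<rho>\<in>J. \<rho> (x - x0) < \<epsilon>} \<subseteq> U}"

definition is_elcs :: "('k::real_normed_field \<Rightarrow> 'a::ab_group_add \<Rightarrow> 'a) \<Rightarrow> 'a set set \<Rightarrow> bool" where
  "is_elcs s \<tau> \<longleftrightarrow> (\<exists>P. (\<forall>\<rho>\<in>P. ext_seminorm s \<rho>) \<and> \<tau> = induced_topology P)"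

definition is_lc_topology :: "('k::real_normed_field \<Rightarrow> 'a::ab_group_add \<Rightarrow> 'a) \<Rightarrow> 'a set set \<Rightarrow> bool" where
  "is_lc_topology s \<sigma> \<longleftrightarrow> (\<exists>P. (\<forall>\<rho>\<in>P. seminorm s \<rho>) \<and> \<sigma> = induced_topology P)"

end

theory Submission
  imports Defs
begin

lemma ball_open:
  fixes \<rho> :: "'a::ab_group_add \<Rightarrow> ennreal"
  assumes tri: "\<forall>x y. \<rho> (x + y) \<le> \<rho> x + \<rho> y" and "\<rho> \<in> P"
  shows "{x. \<rho> (x - x0) < \<epsilon>} \<in> induced_topology P"
  unfolding induced_topology_def
proof (intro CollectI ballI)
  fix x assume "x \<in> {x. \<rho> (x - x0) < \<epsilon>}"
  hence d: "\<rho> (x - x0) < \<epsilon>" by simp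
  define \<delta> where "\<delta> = \<epsilon> - \<rho> (x - x0)"
  have dpos: "\<delta> > 0" using d unfolding \<delta>_def by (simp add: diff_gr0_ennreal)
  have "{y. \<forall>\<rho>'\<in>{\<rho>}. \<rho>' (y - x) < \<delta>} \<subseteq> {x. \<rho> (x - x0) < \<epsilon>}"
  proof
    fix y assume "y \<in> {y. \<forall>\<rho>'\<in>{\<rho>}. \<rho>' (y - x) < \<delta>}"
    hence a: "\<rho> (y - x) < \<delta>" by simp
    have "\<rho> (y - x0) = \<rho> ((y - x) + (x - x0))" by simp
    also have "\<dots> \<le> \<rho> (y - x) + \<rho> (x - x0)" using tri by blast
    also have "\<dots> < \<epsilon>" using a d unfolding \<delta>_def
      by (metis add.commute less_diff_eq_ennreal less_imp_le top.not_eq_extremum ennreal_add_diff_cancel_right order_less_le_trans)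
    finally show "y \<in> {x. \<rho> (x - x0) < \<epsilon>}" by simp
  qed
  thus "\<exists>J \<epsilon>'. finite J \<and> J \<subseteq> P \<and> \<epsilon>' > 0 \<and> {y. \<forall>\<rho>\<in>J. \<rho> (y - x) < \<epsilon>'} \<subseteq> {x. \<rho> (x - x0) < \<epsilon>}"
    using dpos assms(2) by (intro exI[of _ "{\<rho>}"] exI[of _ \<delta>]) auto
qed

lemma induced_mono:
  assumes "R \<subseteq> Q" shows "induced_topology R \<subseteq> induced_topology Q"
proof
  fix U assume U: "U \<in> induced_topology R"
  show "U \<in> induced_topology Q" unfolding induced_topology_def
  proof (intro CollectI ballI)
    fix x0 assume "x0 \<in> U"
    then obtain J \<epsilon> where "finite J" "J \<subseteq> R" "\<epsilon> > 0" "{x. \<forall>\<rho>\<in>J. \<rho> (x - x0) < \<epsilon>} \<subseteq> U"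
      using U unfolding induced_topology_def by blast
    moreover have "J \<subseteq> Q" using \<open>J \<subseteq> R\<close> assms by (rule subset_trans)
    ultimately show "\<exists>J \<epsilon>. finite J \<and> J \<subseteq> Q \<and> \<epsilon> > 0 \<and> {x. \<forall>\<rho>\<in>J. \<rho> (x - x0) < \<epsilon>} \<subseteq> U"
      by blast
  qed
qed

lemma main_generic:
  fixes s :: "'k::real_normed_field \<Rightarrow> 'a::ab_group_add \<Rightarrow> 'a"
  assumes vs: "vector_space s" and "is_elcs s \<tau>"
  shows "\<exists>\<tau>F. is_lc_topology s \<tau>F \<and> \<tau>F \<subseteq> \<tau> \<and>
                 (\<forall>\<sigma>. is_lc_topology s \<sigma> \<and> \<sigma> \<subseteq> \<tau> \<longrightarrow> \<sigma> \<subseteq> \<tau>F)"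
proof -
  obtain P where P: "\<forall>\<rho>\<in>P. ext_seminorm s \<rho>" and tau: "\<tau> = induced_topology P"
    using assms(2) unfolding is_elcs_def by blast
  define Q where "Q = {\<rho>. seminorm s \<rho> \<and> (\<forall>x0 \<epsilon>. \<epsilon> > 0 \<longrightarrow> (\<exists>J \<delta>. finite J \<and> J \<subseteq> P \<and> \<delta> > 0 \<and>
       {x. \<forall>\<rho>'\<in>J. \<rho>' (x - x0) < \<delta>} \<subseteq> {x. \<rho> (x - x0) < \<epsilon>}))}"
  have lc: "is_lc_topology s (induced_topology Q)"
    unfolding is_lc_topology_def by (rule exI[of _ Q]) (auto simp: Q_def)
  have sub: "induced_topology Q \<subseteq> \<tau>"
  proof
    fix U assume U: "U \<in> induced_topology Q"
    show "U \<in> \<tau>" unfolding tau induced_topology_def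
    proof (intro CollectI ballI)
      fix x0 assume "x0 \<in> U"
      then obtain J \<epsilon> where J: "finite J" "J \<subseteq> Q" "\<epsilon> > 0"
        and JU: "{x. \<forall>\<rho>\<in>J. \<rho> (x - x0) < \<epsilon>} \<subseteq> U"
        using U unfolding induced_topology_def by blast
      have "\<forall>\<rho>\<in>J. \<exists>K \<delta>. finite K \<and> K \<subseteq> P \<and> \<delta> > 0 \<and>
         {x. \<forall>\<rho>'\<in>K. \<rho>' (x - x0) < \<delta>} \<subseteq> {x. \<rho> (x - x0) < \<epsilon>}"
        using J unfolding Q_def by blast
      then obtain K where "\<forall>\<rho>\<in>J. \<exists>\<delta>. finite (K \<rho>) \<and> K \<rho> \<subseteq> P \<and> \<delta> > 0 \<and>
         {x. \<forall>\<rho>'\<in>K \<rho>. \<rho>' (x - x0) < \<delta>} \<subseteq> {x. \<rho> (x - x0) < \<epsilon>}"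
        by (rule bchoice[elim_format]) blast
      then obtain \<delta> where K0: "\<forall>\<rho>\<in>J. finite (K \<rho>) \<and> K \<rho> \<subseteq> P \<and> \<delta> \<rho> > 0 \<and>
         {x. \<forall>\<rho>'\<in>K \<rho>. \<rho>' (x - x0) < \<delta> \<rho>} \<subseteq> {x. \<rho> (x - x0) < \<epsilon>}"
        by (rule bchoice[elim_format]) blast
      have K: "finite (K \<rho>) \<and> K \<rho> \<subseteq> P \<and> \<delta> \<rho> > 0 \<and>
         {x. \<forall>\<rho>'\<in>K \<rho>. \<rho>' (x - x0) < \<delta> \<rho>} \<subseteq> {x. \<rho> (x - x0) < \<epsilon>}" if "\<rho> \<in> J" for \<rho>
        using K0 that by blast
      define KK where "KK = (\<Union>\<rho>\<in>J. K \<rho>)"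
      define d where "d = Min (insert 1 (\<delta> ` J))"
      have fin: "finite (insert 1 (\<delta> ` J))" using J by simp
      have dpos: "d > 0" unfolding d_def using fin K by (subst Min_gr_iff) auto
      have dle: "\<And>\<rho>. \<rho> \<in> J \<Longrightarrow> d \<le> \<delta> \<rho>" unfolding d_def using fin by simp
      have "{x. \<forall>\<rho>\<in>KK. \<rho> (x - x0) < d} \<subseteq> U"
      proof
        fix x assume x: "x \<in> {x. \<forall>\<rho>\<in>KK. \<rho> (x - x0) < d}"
        have "\<forall>\<rho>\<in>J. \<rho> (x - x0) < \<epsilon>"
        proof
          fix \<rho> assume r: "\<rho> \<in> J"
          have "x \<in> {x. \<forall>\<rho>'\<in>K \<rho>. \<rho>' (x - x0) < \<delta> \<rho>}"
            using x r dle[OF r] unfolding KK_def by (auto intro: order_less_le_trans)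
          thus "\<rho> (x - x0) < \<epsilon>" using K[OF r] by blast
        qed
        thus "x \<in> U" using JU by blast
      qed
      moreover have "finite KK" "KK \<subseteq> P" unfolding KK_def using J K by auto
      ultimately show "\<exists>J \<epsilon>. finite J \<and> J \<subseteq> P \<and> \<epsilon> > 0 \<and> {x. \<forall>\<rho>\<in>J. \<rho> (x - x0) < \<epsilon>} \<subseteq> U"
        using dpos by blast
    qed
  qed
  have max: "\<sigma> \<subseteq> induced_topology Q" if hs: "is_lc_topology s \<sigma>" "\<sigma> \<subseteq> \<tau>" for \<sigma>
  proof -
    obtain R where R: "\<forall>\<rho>\<in>R. seminorm s \<rho>" and sig: "\<sigma> = induced_topology R"
      using hs(1) unfolding is_lc_topology_def by blast
    have RQ: "R \<subseteq> Q"
    proof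
      fix \<rho> assume r: "\<rho> \<in> R"
      have tri: "\<forall>x y. \<rho> (x + y) \<le> \<rho> x + \<rho> y"
        using R r unfolding seminorm_def ext_seminorm_def by simp
      have "\<exists>J \<delta>. finite J \<and> J \<subseteq> P \<and> \<delta> > 0 \<and>
       {x. \<forall>\<rho>'\<in>J. \<rho>' (x - x0) < \<delta>} \<subseteq> {x. \<rho> (x - x0) < \<epsilon>}" if "\<epsilon> > 0" for x0 \<epsilon>
      proof -
        have "{x. \<rho> (x - x0) < \<epsilon>} \<in> \<tau>" using ball_open[OF tri r] sig \<open>\<sigma> \<subseteq> \<tau>\<close> by blast
        moreover have "x0 \<in> {x. \<rho> (x - x0) < \<epsilon>}"
        proof -
          interpret vector_space s by (rule vs)
          have h: "\<forall>\<alpha> x. \<rho> (s \<alpha> x) = ennreal (norm \<alpha>) * \<rho> x"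
            using R r unfolding seminorm_def ext_seminorm_def by simp
          have "\<rho> 0 = 0" using h[rule_format, of 0 0] by simp
          thus ?thesis using that by simp
        qed
        ultimately show ?thesis unfolding tau induced_topology_def by blast
      qed
      thus "\<rho> \<in> Q" using R r by (simp add: Q_def)
    qed
    show ?thesis unfolding sig by (rule induced_mono[OF RQ])
  qed
  show ?thesis using lc sub max by blast
qed

theorem theorem3p2:
  shows "(\<forall>(s :: real \<Rightarrow> 'a::ab_group_add \<Rightarrow> 'a) \<tau>. vector_space s \<and> is_elcs s \<tau> \<longrightarrow>
           (\<exists>\<tau>F. is_lc_topology s \<tau>F \<and> \<tau>F \<subseteq> \<tau> \<and>
                 (\<forall>\<sigma>. is_lc_topology s \<sigma> \<and> \<sigma> \<subseteq> \<tau> \<longrightarrow> \<sigma> \<subseteq> \<tau>F))) \<and>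
         (\<forall>(s :: complex \<Rightarrow> 'b::ab_group_add \<Rightarrow> 'b) \<tau>. vector_space s \<and> is_elcs s \<tau> \<longrightarrow>
           (\<exists>\<tau>F. is_lc_topology s \<tau>F \<and> \<tau>F \<subseteq> \<tau> \<and>
                 (\<forall>\<sigma>. is_lc_topology s \<sigma> \<and> \<sigma> \<subseteq> \<tau> \<longrightarrow> \<sigma> \<subseteq> \<tau>F)))"
  by (intro conjI allI impI; erule conjE; erule (1) main_generic)

end
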